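(* Let $K$ be a field of characteristic $0$, let $E$ be the infinite-dimensional unitary Grassmann algebra over $K$ with even part $E_0$, let $A=\begin{pmatrix} E_0 & E\\ 0 & E\end{pmatrix}$, and let $F_n(A)=K\langle x_1,\dots,x_n\rangle/(K\langle x_1,\dots,x_n\rangle\cap T(A))$. Let $n\geq 2$ be even and $m\geq n+3$. Then the polynomial \[f_{m,n+1}^{(4)}=\sum_{\sigma\in S_{n+1}}(-1)^{\sigma}[x_2,x_1,x_{\sigma(1)},x_1,\dots,x_1][x_{\sigma(2)},x_{\sigma(3)}]\cdots[x_{\sigma(n)},x_{\sigma(n+1)}],\] where each first factor is the left-normed commutator of length $m-n$ consisting of $x_2,x_1,x_{\sigma(1)}$ followed by $m-n-3$ copies of $x_1$, is not a polynomial identity of $F_n(A)$.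
   Context: All algebras are associative and unitary over $K$; $T(A)$ is the ideal of polynomial identities of $A$. $E$ is generated by anticommuting $e_1,e_2,\dots$ and $E_0$ is the span of basis products of even length. Commutators: $[a,b]=ab-ba$, $[a_1,\dots,a_k]=[[a_1,\dots,a_{k-1}],a_k]$; $(-1)^\sigma$ is the sign of $\sigma$. The polynomial has total degree $m$. *)

theory Defs
  imports Main "HOL-Library.Function_Algebras" "HOL-Library.Product_Plus"
    "HOL-Combinatorics.Permutations"
begin

text \<open>An element of E is a K-linear combination of basis monomials e_S = e_{s1}...e_{sk}
  (s1 < ... < sk), indexed by finite sets S of natural numbers (generators e_0, e_1, ...).\<close>

type_synonym 'k grass = "nat set \<Rightarrow> 'k"

definition grass_carrier :: "'k::field grass set" where
  "grass_carrier = {x. finite {S. x S \<noteq> 0} \<and> (\<forall>S. x S \<noteq> 0 \<longrightarrow> finite S)}"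

definition grass_even :: "'k::field grass set" where
  "grass_even = {x \<in> grass_carrier. \<forall>S. x S \<noteq> 0 \<longrightarrow> even (card S)}"

text \<open>Sign of e_S e_T = gsign S T * e_(S union T) for disjoint S, T.\<close>
definition gsign :: "nat set \<Rightarrow> nat set \<Rightarrow> 'k::field" where
  "gsign S T = (-1) ^ card {(s, t). s \<in> S \<and> t \<in> T \<and> t < s}"

definition gmul :: "'k::field grass \<Rightarrow> 'k grass \<Rightarrow> 'k grass" where
  "gmul x y = (\<lambda>U. \<Sum>S\<in>Pow U. gsign S (U - S) * x S * y (U - S))"

definition gone :: "'k::field grass" where
  "gone = (\<lambda>S. if S = {} then 1 else 0)"

definition gscal :: "'k::field \<Rightarrow> 'k grass \<Rightarrow> 'k grass" where
  "gscal c x = (\<lambda>S. c * x S)"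

text \<open>(a, b, c) represents the upper triangular matrix [[a, b], [0, c]].
  Addition and zero are the componentwise ones (product / function instances).\<close>

type_synonym 'k ualg = "'k grass \<times> 'k grass \<times> 'k grass"

definition A_carrier :: "'k::field ualg set" where
  "A_carrier = {(a, b, c). a \<in> grass_even \<and> b \<in> grass_carrier \<and> c \<in> grass_carrier}"

definition amul :: "'k::field ualg \<Rightarrow> 'k ualg \<Rightarrow> 'k ualg" where
  "amul X Y = (case X of (a, b, c) \<Rightarrow> case Y of (a', b', c') \<Rightarrow>
      (gmul a a', gmul a b' + gmul b c', gmul c c'))"

definition aone :: "'k::field ualg" where
  "aone = (gone, 0, gone)"

definition ascal :: "'k::field \<Rightarrow> 'k ualg \<Rightarrow> 'k ualg" where
  "ascal k X = (case X of (a, b, c) \<Rightarrow> (gscal k a, gscal k b, gscal k c))"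

definition acomm :: "'k::field ualg \<Rightarrow> 'k ualg \<Rightarrow> 'k ualg" where
  "acomm X Y = amul X Y - amul Y X"

fun lcomm :: "'k::field ualg list \<Rightarrow> 'k ualg" where
  "lcomm [] = 0"
| "lcomm (x # xs) = foldl acomm x xs"

fun aprod :: "'k::field ualg list \<Rightarrow> 'k ualg" where
  "aprod [] = aone"
| "aprod (x # xs) = amul x (aprod xs)"

text \<open>Every element of K<x_1,...,x_n> is represented by an expression built from
  variables x_i, scalars, sums and products; evaluation is the substitution homomorphism.\<close>

datatype 'k ncexpr = NVar nat | NConst 'k | NAdd "'k ncexpr" "'k ncexpr" | NMul "'k ncexpr" "'k ncexpr"

fun ncvars :: "'k ncexpr \<Rightarrow> nat set" where
  "ncvars (NVar i) = {i}"
| "ncvars (NConst c) = {}"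
| "ncvars (NAdd p q) = ncvars p \<union> ncvars q"
| "ncvars (NMul p q) = ncvars p \<union> ncvars q"

fun aeval :: "(nat \<Rightarrow> 'k::field ualg) \<Rightarrow> 'k ncexpr \<Rightarrow> 'k ualg" where
  "aeval a (NVar i) = a i"
| "aeval a (NConst c) = ascal c aone"
| "aeval a (NAdd p q) = aeval a p + aeval a q"
| "aeval a (NMul p q) = amul (aeval a p) (aeval a q)"

definition f4_val :: "nat \<Rightarrow> nat \<Rightarrow> (nat \<Rightarrow> 'k::field ualg) \<Rightarrow> 'k ualg" where
  "f4_val m n y =
    (\<Sum>\<sigma>\<in>{\<sigma>. \<sigma> permutes {1..n+1}}.
       ascal (of_int (sign \<sigma>))
         (amul (lcomm ([y 2, y 1, y (\<sigma> 1)] @ replicate (m - n - 3) (y 1)))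
               (aprod (map (\<lambda>j. acomm (y (\<sigma> (2*j))) (y (\<sigma> (2*j+1)))) [1..<n div 2 + 1]))))"

text \<open>f is a polynomial identity of F_n(A) iff for all polynomials p_1, ..., p_(n+1) in
  K<x_1,...,x_n>, f(p_1,...,p_(n+1)) lies in T(A), i.e. vanishes under every
  substitution x_i := a_i in A.\<close>

definition f4_PI_of_FnA :: "nat \<Rightarrow> nat \<Rightarrow> 'k::field itself \<Rightarrow> bool" where
  "f4_PI_of_FnA m n _ =
    (\<forall>p :: nat \<Rightarrow> 'k ncexpr. (\<forall>j\<in>{1..n+1}. ncvars (p j) \<subseteq> {1..n}) \<longrightarrow>
       (\<forall>a :: nat \<Rightarrow> 'k ualg. (\<forall>i\<in>{1..n}. a i \<in> A_carrier) \<longrightarrow>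
          f4_val m n (\<lambda>j. aeval a (p j)) = 0))"

end

theory Submission
  imports Defs
begin


definition smono :: "'k::field \<Rightarrow> nat set \<Rightarrow> 'k grass" where
  "smono c S = (\<lambda>T. if T = S then c else 0)"

lemma gmul_smono:
  assumes fin: "finite S" "finite T"
  shows "gmul (smono c S) (smono d T) = (if S \<inter> T = {} then smono (gsign S T * c * d) (S \<union> T) else 0)"
proof (rule ext)
  fix U
  show "gmul (smono c S) (smono d T) U = (if S \<inter> T = {} then smono (gsign S T * c * d) (S \<union> T) else 0) U"
  proof (cases "finite U")
    case False
    then have "infinite (Pow U)" by simp
    moreover have "U \<noteq> S \<union> T" using False fin by auto
    ultimately show ?thesis unfolding gmul_def smono_def by auto
  next
    case True
  have "gmul (smono c S) (smono d T) U =
     (\<Sum>S'\<in>Pow U. if S' = S then gsign S (U - S) * c * (if U - S = T then d else 0) else 0)"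
    unfolding gmul_def smono_def by (rule sum.cong) auto
  also have "\<dots> = (if S \<subseteq> U \<and> U - S = T then gsign S T * c * d else 0)"
    by (subst sum.delta) (use True in auto)
  also have "\<dots> = (if S \<inter> T = {} then smono (gsign S T * c * d) (S \<union> T) else 0) U"
    unfolding smono_def by auto
  finally show ?thesis .
  qed
qed

lemma gone_smono: "gone = smono 1 {}"
  unfolding gone_def smono_def by auto

lemma smono_zero[simp]: "smono 0 S = 0"
  unfolding smono_def by auto

lemma smono_diff: "smono c S - smono d S = smono (c - d) S"
  unfolding smono_def by auto

lemma gmul_zero_left[simp]: "gmul 0 x = 0"
  unfolding gmul_def by auto
lemma gmul_zero_right[simp]: "gmul x 0 = 0"
  unfolding gmul_def by auto

lemma gmul_aug: "gmul x y {} = x {} * y {}"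
  unfolding gmul_def gsign_def by simp

lemma gsign_empty1[simp]: "gsign {} T = 1"
  unfolding gsign_def by simp

lemma gsign_split2:
  assumes "finite S" "finite T" "finite R" "T \<inter> R = {}"
  shows "gsign S (T \<union> R) = gsign S T * gsign S R"
proof -
  have e: "{(s, t). s \<in> S \<and> t \<in> T \<union> R \<and> t < s} =
     {(s, t). s \<in> S \<and> t \<in> T \<and> t < s} \<union> {(s, t). s \<in> S \<and> t \<in> R \<and> t < s}" by auto
  have f1: "finite {(s, t). s \<in> S \<and> t \<in> T \<and> t < s}"
    by (rule finite_subset[of _ "S \<times> T"]) (use assms in auto)
  have f2: "finite {(s, t). s \<in> S \<and> t \<in> R \<and> t < s}"
    by (rule finite_subset[of _ "S \<times> R"]) (use assms in auto)
  show ?thesis unfolding gsign_def e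
    by (subst card_Un_disjoint[OF f1 f2]) (use assms in \<open>auto simp: power_add\<close>)
qed

lemma gsign_split1:
  assumes "finite S" "finite T" "finite R" "S \<inter> T = {}"
  shows "gsign (S \<union> T) R = gsign S R * gsign T R"
proof -
  have e: "{(s, t). s \<in> S \<union> T \<and> t \<in> R \<and> t < s} =
     {(s, t). s \<in> S \<and> t \<in> R \<and> t < s} \<union> {(s, t). s \<in> T \<and> t \<in> R \<and> t < s}" by auto
  have f1: "finite {(s, t). s \<in> S \<and> t \<in> R \<and> t < s}"
    by (rule finite_subset[of _ "S \<times> R"]) (use assms in auto)
  have f2: "finite {(s, t). s \<in> T \<and> t \<in> R \<and> t < s}"
    by (rule finite_subset[of _ "T \<times> R"]) (use assms in auto)
  show ?thesis unfolding gsign_def e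
    by (subst card_Un_disjoint[OF f1 f2]) (use assms in \<open>auto simp: power_add\<close>)
qed

lemma gsign_single: "gsign {a} {b} = (if b < a then -1 else (1::'k::field))"
proof -
  have "{(s, t). s \<in> {a} \<and> t \<in> {b} \<and> t < s} = (if b < a then {(a,b)} else {})" by auto
  then show ?thesis unfolding gsign_def by simp
qed

lemma gsign_swap: "a \<noteq> b \<Longrightarrow> gsign {b} {a} = - (gsign {a} {b} :: 'k::field)"
  by (auto simp: gsign_single)

definition gen :: "nat \<Rightarrow> 'k::field grass" where
  "gen a = smono 1 {a}"

fun lc :: "nat list \<Rightarrow> 'k::field" where
  "lc [] = 1"
| "lc (x # xs) = gsign {x} (set xs) * lc xs"

definition cpp :: "(nat \<Rightarrow> nat) \<Rightarrow> nat list \<Rightarrow> 'k::field grass" where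
  "cpp f js = foldr (\<lambda>j acc. gmul (gmul (gen (f (2*j))) (gen (f (2*j+1))) - gmul (gen (f (2*j+1))) (gen (f (2*j)))) acc) js gone"

definition flatj :: "(nat \<Rightarrow> nat) \<Rightarrow> nat list \<Rightarrow> nat list" where
  "flatj f js = concat (map (\<lambda>j. [f (2*j), f (2*j+1)]) js)"

lemma flatj_simps[simp]: "flatj f [] = []" "flatj f (j # js) = f (2*j) # f (2*j+1) # flatj f js"
  unfolding flatj_def by auto

lemma cpp_Cons: "cpp f (j # js) = gmul (gmul (gen (f (2*j))) (gen (f (2*j+1))) - gmul (gen (f (2*j+1))) (gen (f (2*j)))) (cpp f js)"
  unfolding cpp_def by simp

lemma cpp_eval:
  assumes "distinct (flatj f js)"
  shows "cpp f js = (smono (2 ^ length js * lc (flatj f js)) (set (flatj f js)) :: 'k::field grass)"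
  using assms
proof (induction js)
  case Nil
  then show ?case by (simp add: cpp_def gone_smono)
next
  case (Cons j js)
  define a where "a = f (2*j)"
  define b where "b = f (2*j+1)"
  define R where "R = set (flatj f js)"
  have d: "a \<noteq> b" "a \<notin> R" "b \<notin> R" "distinct (flatj f js)"
    using Cons.prems unfolding a_def b_def R_def by auto
  have fR: "finite R" unfolding R_def by simp
  have IH: "cpp f js = (smono (2 ^ length js * lc (flatj f js)) R :: 'k grass)"
    using Cons.IH d(4) R_def by simp
  have c1: "gmul (gen a) (gen b) - gmul (gen b) (gen a) = smono (gsign {a} {b} - gsign {b} {a}) {a, b}"
    unfolding gen_def using d(1) by (simp add: gmul_smono smono_diff insert_commute)
  have "(cpp f (j # js) :: 'k grass) = gmul (smono (gsign {a} {b} - gsign {b} {a}) {a, b}) (smono (2 ^ length js * lc (flatj f js)) R)"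
    unfolding cpp_Cons c1[unfolded a_def b_def] a_def b_def using IH by simp
  also have "\<dots> = smono (gsign {a, b} R * (gsign {a} {b} - gsign {b} {a}) * (2 ^ length js * lc (flatj f js))) ({a,b} \<union> R)"
    using d fR by (simp add: gmul_smono)
  also have "gsign {a, b} R * (gsign {a} {b} - gsign {b} {a}) * (2 ^ length js * lc (flatj f js))
       = (2 ^ length (j # js) * lc (flatj f (j # js)) :: 'k)"
  proof -
    have g1: "gsign {a, b} R = (gsign {a} R * gsign {b} R :: 'k)"
      using gsign_split1[of "{a}" "{b}" R] d fR by (simp add: insert_is_Un[symmetric] insert_commute)
    have g2: "gsign {a} (insert b R) = (gsign {a} {b} * gsign {a} R :: 'k)"
      using gsign_split2[of "{a}" "{b}" R] d fR by (simp add: insert_is_Un[symmetric])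
    have lcab: "lc (flatj f (j#js)) = (gsign {a} (insert b R) * gsign {b} R * lc (flatj f js) :: 'k)"
      by (simp add: a_def b_def R_def)
    show ?thesis using gsign_swap[OF d(1), where 'k='k] unfolding lcab
      by (simp add: g1 g2 algebra_simps)
  qed
  finally show ?case by (simp add: a_def b_def R_def)
qed

lemma gsign_ins: "finite Y \<Longrightarrow> b \<notin> Y \<Longrightarrow> gsign {a} (insert b Y) = gsign {a} {b} * (gsign {a} Y :: 'k::field)"
  using gsign_split2[of "{a}" "{b}" Y] by (simp add: insert_is_Un[symmetric])

lemma lc_adj: "distinct (xs @ a # b # ys) \<Longrightarrow> lc (xs @ a # b # ys) = - (lc (xs @ b # a # ys) :: 'k::field)"
proof (induction xs)
  case Nil
  then have d: "a \<noteq> b" "a \<notin> set ys" "b \<notin> set ys" by auto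
  have e1: "gsign {a} (insert b (set ys)) = gsign {a} {b} * (gsign {a} (set ys) :: 'k)"
    using gsign_ins[of "set ys" b a] d by simp
  have e2: "gsign {b} (insert a (set ys)) = gsign {b} {a} * (gsign {b} (set ys) :: 'k)"
    using gsign_ins[of "set ys" a b] d by simp
  have e3: "gsign {b} {a} = - (gsign {a} {b} :: 'k)" using gsign_swap[OF d(1)] .
  have "lc (a # b # ys) = gsign {a} (insert b (set ys)) * (gsign {b} (set ys) * (lc ys :: 'k))"
    by simp
  also have "\<dots> = - (gsign {b} (insert a (set ys)) * (gsign {a} (set ys) * lc ys))"
    unfolding e1 e2 e3 by (simp add: mult_ac)
  also have "\<dots> = - lc (b # a # ys)" by simp
  finally show ?case by simp
next
  case (Cons x xs)
  have se: "set (xs @ a # b # ys) = set (xs @ b # a # ys)" by auto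
  have IH: "lc (xs @ a # b # ys) = - (lc (xs @ b # a # ys) :: 'k)" using Cons by simp
  show ?case by (simp only: append_Cons lc.simps se IH mult_minus_right)
qed

lemma lc_move: "distinct (xs @ a # ms @ ys) \<Longrightarrow> lc (xs @ a # ms @ ys) = (-1) ^ length ms * (lc (xs @ ms @ a # ys) :: 'k::field)"
proof (induction ms arbitrary: xs)
  case Nil
  then show ?case by simp
next
  case (Cons m ms)
  have "lc (xs @ a # m # ms @ ys) = - (lc (xs @ m # a # ms @ ys) :: 'k)"
    using lc_adj[of xs a m "ms @ ys"] Cons.prems by simp
  also have "lc (xs @ m # a # ms @ ys) = lc ((xs @ [m]) @ a # ms @ ys)" by simp
  also have "\<dots> = (-1) ^ length ms * (lc ((xs @ [m]) @ ms @ a # ys) :: 'k)"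
    by (rule Cons.IH) (use Cons.prems in auto)
  finally show ?case by simp
qed

lemma lc_swap: "distinct (xs @ a # ms @ b # ys) \<Longrightarrow> lc (xs @ b # ms @ a # ys) = - (lc (xs @ a # ms @ b # ys) :: 'k::field)"
proof -
  assume d: "distinct (xs @ a # ms @ b # ys)"
  have 1: "lc (xs @ a # (ms @ [b]) @ ys) = (-1) ^ length (ms @ [b]) * (lc (xs @ (ms @ [b]) @ a # ys) :: 'k)"
    by (rule lc_move) (use d in auto)
  have 2: "lc (xs @ b # ms @ (a # ys)) = (-1) ^ length ms * (lc (xs @ ms @ b # a # ys) :: 'k)"
    by (rule lc_move) (use d in auto)
  show ?thesis using 1 2 by simp
qed

lemma lc_transpose:
  assumes "distinct L" "a \<in> set L" "b \<in> set L" "a \<noteq> b"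
  shows "lc (map (transpose a b) L) = - (lc L :: 'k::field)"
proof -
  obtain xs ys where L: "L = xs @ a # ys" using assms(2) split_list by metis
  have idm: "map (transpose a b) zs = zs" if "a \<notin> set zs" "b \<notin> set zs" for zs
    using that by (induction zs) auto
  show ?thesis
  proof (cases "b \<in> set ys")
    case True
    then obtain ms zs where ys: "ys = ms @ b # zs" using split_list by metis
    have d: "distinct (xs @ a # ms @ b # zs)" using assms(1) L ys by simp
    have m: "map (transpose a b) L = xs @ b # ms @ a # zs"
      using d assms(4) unfolding L ys by (auto simp: idm)
    have L': "L = xs @ a # ms @ b # zs" using L ys by simp
    show ?thesis by (subst m, subst L', rule lc_swap[OF d])
  next
    case False
    then have "b \<in> set xs" using assms(3,4) L by auto
    then obtain ws ms where xs: "xs = ws @ b # ms" using split_list by metis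
    have d: "distinct (ws @ b # ms @ a # ys)" using assms(1) L xs by simp
    have m: "map (transpose a b) L = ws @ a # ms @ b # ys"
      using d assms(4) unfolding L xs by (auto simp: idm)
    have L': "L = ws @ b # ms @ a # ys" using L xs by simp
    have "lc (ws @ a # ms @ b # ys) = - (lc (ws @ b # ms @ a # ys) :: 'k)"
      using lc_swap[OF d] by simp
    then show ?thesis by (subst m, subst L')
  qed
qed



lemma sum_fun_apply: "(sum f A) x = sum (\<lambda>a. f a x) A"
  by (induction A rule: infinite_finite_induct) auto

lemma gmul_smono_U: "finite U \<Longrightarrow> gmul x (smono c U) U = x {} * c"
proof -
  assume fU: "finite U"
  have "gmul x (smono c U) U = (\<Sum>S\<in>Pow U. if S = {} then x {} * c else 0)"
    unfolding gmul_def smono_def by (rule sum.cong) (auto simp: gsign_def)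
  then show ?thesis using fU by (simp add: sum.delta)
qed

definition apart :: "'k::field ualg \<Rightarrow> 'k grass" where "apart X = fst X"
definition bpart :: "'k::field ualg \<Rightarrow> 'k grass" where "bpart X = fst (snd X)"
definition cpart :: "'k::field ualg \<Rightarrow> 'k grass" where "cpart X = snd (snd X)"

lemma cpart_acomm: "cpart (acomm X Y) = gmul (cpart X) (cpart Y) - gmul (cpart Y) (cpart X)"
  unfolding cpart_def acomm_def amul_def by (auto split: prod.splits)

lemma cpart_aprod: "cpart (aprod Xs) = foldr (\<lambda>X acc. gmul (cpart X) acc) Xs gone"
  by (induction Xs) (auto simp: cpart_def amul_def aone_def split: prod.splits)

lemma acomm_zero: "acomm (0, \<beta>, 0) Z = (0, gmul \<beta> (cpart Z) - gmul (apart Z) \<beta>, 0)"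
  unfolding acomm_def amul_def cpart_def apart_def by (auto split: prod.splits)

lemma foldl_zero:
  "\<exists>\<beta>'. foldl acomm (0, \<beta>, 0) Zs = (0, \<beta>', 0) \<and>
     \<beta>' {} = (\<Prod>Z\<leftarrow>Zs. cpart Z {} - apart Z {}) * \<beta> {}"
proof (induction Zs arbitrary: \<beta>)
  case Nil
  have "foldl acomm (0, \<beta>, 0) [] = (0, \<beta>, 0)" by (simp only: foldl_Nil)
  moreover have "\<beta> {} = (\<Prod>Z\<leftarrow>[]. cpart Z {} - apart Z {}) * \<beta> {}" by (simp only: list.map prod_list.Nil mult_1_left)
  ultimately show ?case by blast
next
  case (Cons Z Zs)
  obtain \<beta>' where f1: "foldl acomm (0, gmul \<beta> (cpart Z) - gmul (apart Z) \<beta>, 0) Zs = (0, \<beta>', 0)"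
     and f2: "\<beta>' {} = (\<Prod>Z\<leftarrow>Zs. cpart Z {} - apart Z {}) * (gmul \<beta> (cpart Z) - gmul (apart Z) \<beta>) {}"
    using Cons.IH by blast
  have f3: "foldl acomm (0, \<beta>, 0) (Z # Zs) = foldl acomm (0, gmul \<beta> (cpart Z) - gmul (apart Z) \<beta>, 0) Zs"
    by (simp only: foldl_Cons acomm_zero)
  have f4: "(gmul \<beta> (cpart Z) - gmul (apart Z) \<beta>) {} = (cpart Z {} - apart Z {}) * \<beta> {}"
    by (simp add: gmul_aug algebra_simps)
  have f5: "\<beta>' {} = (\<Prod>Z\<leftarrow>Z # Zs. cpart Z {} - apart Z {}) * \<beta> {}"
    unfolding f2 f4 by (simp only: list.map prod_list.Cons mult_ac)
  show ?case unfolding f3 using f1 f5 by blast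
qed

lemma foldr_gmul_zero:
  assumes "j \<in> set js" "F j = 0"
  shows "foldr (\<lambda>j acc. gmul (F j) acc) js g = 0"
  using assms by (induction js) auto

lemma lc_nz: "(lc xs :: 'k::field) \<noteq> 0"
  by (induction xs) (auto simp: gsign_def)

lemma flatj_upt: "flatj p [1..<h+1] = map p [2..<2*h+2]"
proof (induction h)
  case 0
  then show ?case by simp
next
  case (Suc h)
  have "[2..<2 * Suc h + 2] = [2..<2*h+2] @ [2*h+2, 2*h+3]"
    by (simp add: upt_rec[of "2*h+2"] upt_add_eq_append[of 2 "2*h+2"])
  then show ?case using Suc by (simp add: flatj_def)
qed

lemma flatj_comp: "flatj (t \<circ> p) js = map t (flatj p js)"
  by (induction js) auto

lemma lc_sign:
  assumes "p permutes {2..2*h+1}"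
  shows "(lc (flatj p [1..<h+1]) :: 'k::field) = of_int (sign p) * lc (flatj id [1..<h+1])"
proof -
  have fin: "finite {2..2*h+1}" by simp
  show ?thesis using assms(1) fin
proof (induction p rule: permutes_induct)
  case id
  then show ?case by simp
next
  case (swap a b p)
  have pS: "p permutes {2..2*h+1}" using swap by blast
  have ab: "a \<in> {2..2*h+1}" "b \<in> {2..2*h+1}" "a \<noteq> b" using swap by blast+
  have st: "{2..<2*h+2} = {2..2*h+1}" by auto
  have d: "distinct (flatj p [1..<h+1])" unfolding flatj_upt
    using permutes_inj_on[OF pS] by (simp add: distinct_map)
  have s: "set (flatj p [1..<h+1]) = {2..2*h+1}"
    by (simp only: flatj_upt set_map set_upt st permutes_image[OF pS])
  have pp: "permutation p" using pS permutes_imp_permutation by blast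
  have "lc (flatj (transpose a b \<circ> p) [1..<h+1]) = - (lc (flatj p [1..<h+1]) :: 'k)"
    unfolding flatj_comp by (rule lc_transpose[OF d]) (use s ab in auto)
  moreover have "sign (transpose a b \<circ> p) = - sign p"
  proof -
    have "sign (transpose a b) = -1" using sign_swap_id[of a b] ab(3) by simp
    then show ?thesis by (simp add: sign_compose[OF permutation_swap_id pp])
  qed
  moreover have IH: "lc (flatj p [1..<h+1]) = of_int (sign p) * (lc (flatj id [1..<h+1]) :: 'k)"
    using swap by blast
  ultimately show ?case by (metis mult_minus_left of_int_minus)
qed
qed



definition wp :: "nat \<Rightarrow> 'k::field ncexpr" where
  "wp j = (if j = 1 then NMul (NVar 2) (NVar 2) else NVar (j - 1))"

definition wa :: "nat \<Rightarrow> 'k::field ualg" where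
  "wa i = (if i \<le> 2 then gone else 0, if i = 2 then gone else 0, gen (i+1))"

definition wy :: "nat \<Rightarrow> 'k::field ualg" where
  "wy j = aeval wa (wp j)"

lemma gone_aug[simp]: "gone {} = 1" by (simp add: gone_def)
lemma gen_aug[simp]: "gen a {} = 0" by (simp add: gen_def smono_def)
lemma gmul_gone_gone[simp]: "gmul gone gone = gone"
  by (simp add: gone_smono gmul_smono)
lemma gmul_gen_gen[simp]: "gmul (gen a) (gen a) = 0"
  by (simp add: gen_def gmul_smono)

lemma wy1: "wy 1 = (gone, gone + gmul gone (gen 3), 0)"
  unfolding wy_def wp_def wa_def by (simp add: amul_def)

lemma wyj: "j \<noteq> 1 \<Longrightarrow> wy j = wa (j - 1)"
  unfolding wy_def wp_def by simp

lemma cpart_wy: "j \<ge> 2 \<Longrightarrow> cpart (wy j) = gen j"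
  by (simp add: wyj cpart_def wa_def)

lemma cpart_wy1: "cpart (wy 1) = 0" unfolding wy1 cpart_def by simp
lemma apart_wy1: "apart (wy 1) = gone" unfolding wy1 apart_def by simp
lemma cpart_wy1': "cpart (wy (Suc 0)) = 0" using cpart_wy1 by simp
lemma apart_wy1': "apart (wy (Suc 0)) = gone" using apart_wy1 by simp

lemma first_comm: "\<exists>\<beta>0. acomm (wy 2) (wy 1) = (0, \<beta>0, 0) \<and> \<beta>0 {} = (1::'k::field)"
proof -
  have w2: "wy 2 = ((gone::'k grass), 0, gen 2)" by (simp add: wyj wa_def eval_nat_numeral)
  show ?thesis unfolding w2 wy1 acomm_def amul_def
    by (simp add: gmul_aug)
qed

lemma L_form:
  "\<exists>\<beta>. lcomm ([wy 2, wy 1, wy s] @ replicate k (wy 1)) = (0, \<beta>, 0) \<and>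
     (\<beta> {} :: 'k::field) = (cpart (wy s) {} - apart (wy s) {}) * (-1) ^ k"
proof -
  obtain \<beta>0 :: "'k grass" where b0: "acomm (wy 2) (wy 1) = (0, \<beta>0, 0)" "\<beta>0 {} = 1"
    using first_comm by blast
  have "lcomm ([wy 2, wy 1, wy s] @ replicate k (wy 1)) = foldl acomm (0, \<beta>0, 0) (wy s # replicate k (wy 1))"
    by (simp only: append_Cons append_Nil lcomm.simps foldl_Cons b0(1))
  moreover obtain \<beta>' where "foldl acomm (0, \<beta>0, 0) (wy s # replicate k (wy 1)) = (0, \<beta>', 0)"
     "\<beta>' {} = (\<Prod>Z\<leftarrow>(wy s # replicate k (wy 1)). cpart Z {} - apart Z {}) * \<beta>0 {}"
    using foldl_zero by blast
  moreover have "(\<Prod>Z\<leftarrow>(wy s # replicate k (wy 1)). cpart Z {} - apart Z {}) * \<beta>0 {}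
     = (cpart (wy s) {} - apart (wy s) {}) * ((-1) ^ k :: 'k)"
    by (simp only: b0(2) list.map map_replicate prod_list.Cons prod_list_replicate cpart_wy1 apart_wy1
       gone_aug zero_fun_apply diff_0 mult_1_right)
  ultimately show ?thesis by metis
qed



lemma bpart_ascal: "bpart (ascal c X) S = c * bpart X S"
  by (cases X) (auto simp: ascal_def bpart_def gscal_def)

lemma bpart_amul0: "bpart (amul (0, \<beta>, 0) P) = gmul \<beta> (cpart P)"
  by (cases P) (simp add: amul_def bpart_def cpart_def)

lemma foldr_map_gmul: "foldr (\<lambda>X acc. gmul (cpart X) acc) (map g js) z = foldr (\<lambda>j acc. gmul (cpart (g j)) acc) js z"
  by (induction js) auto

lemma flatj_props:
  assumes "p permutes {2..2*h+1}"
  shows "distinct (flatj p [1..<h+1])" "set (flatj p [1..<h+1]) = {2..2*h+1}"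
proof -
  have st: "{2..<2*h+2} = {2..2*h+1}" by auto
  show "distinct (flatj p [1..<h+1])" unfolding flatj_upt
    using permutes_inj_on[OF assms] by (simp add: distinct_map)
  show "set (flatj p [1..<h+1]) = {2..2*h+1}"
    by (simp only: flatj_upt set_map set_upt st permutes_image[OF assms])
qed

definition CP :: "nat \<Rightarrow> (nat \<Rightarrow> nat) \<Rightarrow> 'k::field grass" where
  "CP h \<sigma> = foldr (\<lambda>j acc. gmul (cpart (acomm (wy (\<sigma> (2*j))) (wy (\<sigma> (2*j+1))))) acc) [1..<h+1] gone"

lemma CP_zero:
  assumes "\<sigma> permutes {1..2*h+1}" "\<sigma> 1 \<noteq> 1"
  shows "CP h \<sigma> = (0 :: 'k::field grass)"
proof -
  have "1 \<in> \<sigma> ` {1..2*h+1}" using permutes_image[OF assms(1)] by simp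
  then obtain i where i: "i \<in> {1..2*h+1}" "\<sigma> i = 1" by auto
  have i2: "i \<ge> 2" using i assms(2) by (cases "i = 1") auto
  define j where "j = i div 2"
  have jin: "j \<in> set [1..<h+1]" using i i2 unfolding j_def by auto
  have "i = 2*j \<or> i = 2*j+1" unfolding j_def by auto
  then have "cpart (acomm (wy (\<sigma> (2*j))) (wy (\<sigma> (2*j+1)))) = (0 :: 'k grass)"
    using i(2) by (auto simp: cpart_acomm cpart_wy1 cpart_wy1')
  then show ?thesis unfolding CP_def by (rule foldr_gmul_zero[OF jin])
qed

lemma CP_cpp:
  assumes "\<sigma> permutes {2..2*h+1}"
  shows "CP h \<sigma> = (cpp \<sigma> [1..<h+1] :: 'k::field grass)"
proof -
  have eqj: "\<And>j. j \<in> set [1..<h+1] \<Longrightarrow> cpart (acomm (wy (\<sigma> (2*j))) (wy (\<sigma> (2*j+1)))) =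
      (gmul (gen (\<sigma> (2*j))) (gen (\<sigma> (2*j+1))) - gmul (gen (\<sigma> (2*j+1))) (gen (\<sigma> (2*j))) :: 'k grass)"
  proof -
    fix j assume "j \<in> set [1..<h+1]"
    then have "2*j \<in> {2..2*h+1}" "2*j+1 \<in> {2..2*h+1}" by auto
    then have "\<sigma> (2*j) \<in> {2..2*h+1}" "\<sigma> (2*j+1) \<in> {2..2*h+1}"
      using permutes_in_image[OF assms] by blast+
    then show "cpart (acomm (wy (\<sigma> (2*j))) (wy (\<sigma> (2*j+1)))) =
      (gmul (gen (\<sigma> (2*j))) (gen (\<sigma> (2*j+1))) - gmul (gen (\<sigma> (2*j+1))) (gen (\<sigma> (2*j))) :: 'k grass)"
      by (simp add: cpart_acomm cpart_wy)
  qed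
  show ?thesis unfolding CP_def cpp_def by (rule foldr_cong[OF refl refl]) (metis eqj)
qed

lemma perm_fix1:
  fixes h :: nat
  assumes "\<sigma> permutes {1..2*h+1}" "\<sigma> 1 = 1"
  shows "\<sigma> permutes {2..2*h+1}"
proof (rule permutes_superset[OF assms(1)])
  fix x assume "x \<in> {1..2*h+1} - {2..2*h+1}"
  then have "x = 1" by auto
  then show "\<sigma> x = x" using assms(2) by simp
qed

definition Tm :: "nat \<Rightarrow> nat \<Rightarrow> (nat \<Rightarrow> nat) \<Rightarrow> 'k::field ualg" where
  "Tm m n \<sigma> = ascal (of_int (sign \<sigma>))
         (amul (lcomm ([wy 2, wy 1, wy (\<sigma> 1)] @ replicate (m - n - 3) (wy 1)))
               (aprod (map (\<lambda>j. acomm (wy (\<sigma> (2*j))) (wy (\<sigma> (2*j+1)))) [1..<n div 2 + 1])))"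

lemma Tm_form:
  "\<exists>\<beta>. bpart (Tm m (2*h) \<sigma>) U = of_int (sign \<sigma>) * gmul \<beta> (CP h \<sigma>) U
       \<and> (\<beta> {} :: 'k::field) = (cpart (wy (\<sigma> 1)) {} - apart (wy (\<sigma> 1)) {}) * (-1) ^ (m - 2*h - 3)"
proof -
  obtain \<beta> where b: "lcomm ([wy 2, wy 1, wy (\<sigma> 1)] @ replicate (m - 2*h - 3) (wy 1)) = (0, \<beta>, 0)"
    "(\<beta> {} :: 'k) = (cpart (wy (\<sigma> 1)) {} - apart (wy (\<sigma> 1)) {}) * (-1) ^ (m - 2*h - 3)"
    using L_form by blast
  have "bpart (Tm m (2*h) \<sigma>) U = of_int (sign \<sigma>) * gmul \<beta> (CP h \<sigma>) U"
    unfolding Tm_def bpart_ascal b(1) bpart_amul0 cpart_aprod foldr_map_gmul CP_def by simp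
  then show ?thesis using b(2) by blast
qed

lemma bsum_nonzero:
  assumes "h \<ge> 1"
  shows "(\<Sum>\<sigma>\<in>{\<sigma>. \<sigma> permutes {1..2*h+1}}. bpart (Tm m (2*h) \<sigma>) {2..2*h+1}) \<noteq> (0 :: 'k::field_char_0)"
proof -
  define U where "U = {2..2*h+1}"
  define c :: 'k where "c = - ((-1) ^ (m - 2*h - 3)) * (2 ^ h * lc (flatj id [1..<h+1]))"
  have fin: "finite {\<sigma>. \<sigma> permutes {1..2*h+1}}" by (rule finite_permutations) simp
  have sub: "{\<sigma>. \<sigma> permutes U} \<subseteq> {\<sigma>. \<sigma> permutes {1..2*h+1}}"
    unfolding U_def by (auto intro: permutes_subset)
  have z: "bpart (Tm m (2*h) \<sigma>) U = (0::'k)" if "\<sigma> \<in> {\<sigma>. \<sigma> permutes {1..2*h+1}} - {\<sigma>. \<sigma> permutes U}" for \<sigma>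
  proof -
    have p: "\<sigma> permutes {1..2*h+1}" "\<not> \<sigma> permutes U" using that by auto
    have "\<sigma> 1 \<noteq> 1" using perm_fix1[OF p(1)] p(2) unfolding U_def by blast
    then have cp: "CP h \<sigma> = (0::'k grass)" using CP_zero[OF p(1)] by blast
    obtain \<beta> where eq: "(bpart (Tm m (2*h) \<sigma>) U :: 'k) = of_int (sign \<sigma>) * gmul \<beta> (CP h \<sigma>) U"
      using Tm_form[of m h \<sigma> U, where 'k='k] by auto
    show ?thesis unfolding eq cp by simp
  qed
  have v: "bpart (Tm m (2*h) \<sigma>) U = c" if "\<sigma> \<in> {\<sigma>. \<sigma> permutes U}" for \<sigma>
  proof -
    have p: "\<sigma> permutes {2..2*h+1}" using that U_def by auto
    have s1: "\<sigma> 1 = 1" using permutes_not_in[OF p] by simp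
    obtain \<beta> where b: "bpart (Tm m (2*h) \<sigma>) U = of_int (sign \<sigma>) * gmul \<beta> (CP h \<sigma>) U"
      "(\<beta> {} :: 'k) = (cpart (wy (\<sigma> 1)) {} - apart (wy (\<sigma> 1)) {}) * (-1) ^ (m - 2*h - 3)"
      using Tm_form by blast
    have b2: "\<beta> {} = - ((-1) ^ (m - 2*h - 3))"
      using b(2) unfolding s1 cpart_wy1 apart_wy1 by simp
    have l: "length [1..<h+1] = h" by simp
    have "CP h \<sigma> = (smono (2 ^ h * lc (flatj \<sigma> [1..<h+1])) U :: 'k grass)"
      unfolding CP_cpp[OF p] cpp_eval[OF flatj_props(1)[OF p]] flatj_props(2)[OF p] l U_def ..
    then have "gmul \<beta> (CP h \<sigma>) U = \<beta> {} * (2 ^ h * lc (flatj \<sigma> [1..<h+1]))"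
      unfolding U_def by (simp only: gmul_smono_U finite_atLeastAtMost)
    also have "\<dots> = \<beta> {} * (2 ^ h * (of_int (sign \<sigma>) * lc (flatj id [1..<h+1])))"
      by (simp only: lc_sign[OF p])
    finally have g: "gmul \<beta> (CP h \<sigma>) U = \<beta> {} * (2 ^ h * (of_int (sign \<sigma>) * lc (flatj id [1..<h+1])))" .
    have ss: "(of_int (sign \<sigma>) :: 'k) * of_int (sign \<sigma>) = 1"
      by (metis of_int_1 of_int_mult sign_idempotent)
    have "bpart (Tm m (2*h) \<sigma>) U = (of_int (sign \<sigma>) * of_int (sign \<sigma>)) * (\<beta> {} * (2 ^ h * lc (flatj id [1..<h+1])))"
      unfolding b(1) g by (simp add: algebra_simps)
    then show ?thesis unfolding ss c_def b2 by simp
  qed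
  have "(\<Sum>\<sigma>\<in>{\<sigma>. \<sigma> permutes {1..2*h+1}}. bpart (Tm m (2*h) \<sigma>) U) = (\<Sum>\<sigma>\<in>{\<sigma>. \<sigma> permutes U}. (bpart (Tm m (2*h) \<sigma>) U :: 'k))"
    by (rule sum.mono_neutral_right[OF fin sub]) (intro ballI, rule z)
  also have "\<dots> = (\<Sum>\<sigma>\<in>{\<sigma>. \<sigma> permutes U}. c)" by (rule sum.cong[OF refl]) (rule v)
  also have "\<dots> = of_nat (fact (2*h)) * c"
    using card_permutations[of U "2*h"] unfolding U_def by simp
  finally have e: "(\<Sum>\<sigma>\<in>{\<sigma>. \<sigma> permutes {1..2*h+1}}. bpart (Tm m (2*h) \<sigma>) U) = of_nat (fact (2*h)) * c" .
  have "c \<noteq> 0" unfolding c_def by (simp add: lc_nz)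
  moreover have "(of_nat (fact (2*h)) :: 'k) \<noteq> 0" by simp
  ultimately show ?thesis using e U_def by simp
qed

lemma bpart_sum: "bpart (\<Sum>x\<in>A. f x) S = (\<Sum>x\<in>A. bpart (f x) S)"
  unfolding bpart_def by (simp add: fst_sum snd_sum sum_fun_apply)

lemma f4_nonzero:
  assumes "h \<ge> 1"
  shows "f4_val m (2*h) (wy :: nat \<Rightarrow> 'k::field_char_0 ualg) \<noteq> 0"
proof
  assume "f4_val m (2*h) (wy :: nat \<Rightarrow> 'k ualg) = 0"
  then have "bpart (f4_val m (2*h) (wy :: nat \<Rightarrow> 'k ualg)) {2..2*h+1} = 0"
    by (simp add: bpart_def)
  moreover have "f4_val m (2*h) (wy :: nat \<Rightarrow> 'k ualg) = (\<Sum>\<sigma>\<in>{\<sigma>. \<sigma> permutes {1..2*h+1}}. Tm m (2*h) \<sigma>)"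
    unfolding f4_val_def Tm_def by simp
  ultimately show False using bsum_nonzero[OF assms, of m, where 'k='k] by (simp add: bpart_sum)
qed

lemma gone_even: "(gone :: 'k::field grass) \<in> grass_even"
proof -
  have "{S. gone S \<noteq> 0} = {{}}" by (auto simp: gone_def)
  then show ?thesis unfolding grass_even_def grass_carrier_def by (auto simp: gone_def)
qed

lemma zero_even: "(0 :: 'k::field grass) \<in> grass_even"
  unfolding grass_even_def grass_carrier_def by auto

lemma gen_carrier: "(gen a :: 'k::field grass) \<in> grass_carrier"
proof -
  have "{S. gen a S \<noteq> (0::'k)} = {{a}}" by (auto simp: gen_def smono_def)
  then show ?thesis unfolding grass_carrier_def by (auto simp: gen_def smono_def)
qed

lemma wa_carrier: "wa i \<in> A_carrier"
  using gone_even zero_even gen_carrier unfolding A_carrier_def wa_def grass_even_def by auto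

theorem lemma3p8:
  fixes n m :: nat
  assumes "even n" and "n \<ge> 2" and "m \<ge> n + 3"
  shows "\<not> f4_PI_of_FnA m n TYPE('k::field_char_0)"
proof -
  obtain h where n: "n = 2*h" using assms(1) by blast
  have h: "h \<ge> 1" using assms(2) n by simp
  have vars: "\<forall>j\<in>{1..n+1}. ncvars (wp j :: 'k ncexpr) \<subseteq> {1..n}"
    using assms(2) by (auto simp: wp_def)
  have car: "\<forall>i\<in>{1..n}. (wa i :: 'k ualg) \<in> A_carrier" using wa_carrier by blast
  have "f4_val m n (\<lambda>j. aeval (wa :: nat \<Rightarrow> 'k ualg) (wp j)) \<noteq> 0"
    using f4_nonzero[OF h, of m, where 'k='k] unfolding n wy_def by simp
  then show ?thesis unfolding f4_PI_of_FnA_def using vars car by blast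
qed


end
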